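(* Let $n>0$ be an integer and let $(\xi_k)_{k\geq 0}$ be a sequence of positive real numbers. Suppose there exist $k_0>0$ and real numbers $A_1,A_2>0$, $\alpha>\beta>0$ and $\epsilon>0$ such that $$\xi_1\leq \exp\Big(-\alpha\sum_{i=1}^n\frac{1}{k_0+i}\Big)\xi_0+A_1$$ and, for every integer $k\geq1$, $$\xi_{k+1}\leq \exp\Big(-\alpha\sum_{i=1}^n\frac{1}{k_0+nk+i}+\frac{\epsilon}{k^2}\Big)\xi_k+\frac{A_2}{(k_0+n(k+1))^{\beta+1}}.$$ Then, with $c:=e^{\epsilon\pi^2/6}$, for every $K\geq1$, $$\xi_K\leq \frac{c(k_0+1)^\alpha}{(k_0+nK)^\alpha}\xi_0+\frac{c(k_0+n+1)^\alpha A_1}{(k_0+nK)^\alpha}+\frac{\frac{c}{\alpha-\beta}e^{\frac{\alpha}{k_0+n+1}}A_2}{n(k_0+nK)^\beta}+\frac{c\,e^{\frac{\alpha}{k_0+n+1}}A_2}{(k_0+nK)^{\beta+1}}.$$ *)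

theory Defs
  imports "HOL-Analysis.Analysis"
begin

end

theory Submission
  imports Defs
begin

lemma tangent_powr:
  fixes x y g :: real
  assumes "0 < y" "y < x" "g > 0"
  shows "g \<ge> 1 \<Longrightarrow> g * y powr (g-1) * (x-y) \<le> x powr g - y powr g"
    and "g \<le> 1 \<Longrightarrow> g * x powr (g-1) * (x-y) \<le> x powr g - y powr g"
proof -
  have "\<exists>z. y < z \<and> z < x \<and> x powr g - y powr g = (x - y) * (g * z powr (g - 1))"
    by (rule MVT2[OF \<open>y < x\<close>]) (use assms in \<open>auto intro!: has_real_derivative_powr\<close>)
  then obtain z where z: "y < z" "z < x" "x powr g - y powr g = (x - y) * (g * z powr (g - 1))"
    by blast
  show "g \<ge> 1 \<Longrightarrow> g * y powr (g-1) * (x-y) \<le> x powr g - y powr g"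
  proof -
    assume "g \<ge> 1"
    then have "y powr (g-1) \<le> z powr (g-1)" using z assms by (intro powr_mono2) auto
    then show ?thesis using z assms by (simp add: mult_left_mono mult.commute mult.left_commute)
  qed
  show "g \<le> 1 \<Longrightarrow> g * x powr (g-1) * (x-y) \<le> x powr g - y powr g"
  proof -
    assume "g \<le> 1"
    then have "x powr (g-1) \<le> z powr (g-1)" using z assms by (intro powr_mono2') auto
    then show ?thesis using z assms by (simp add: mult_left_mono mult.commute mult.left_commute)
  qed
qed

lemma sum_powr_bound:
  fixes k0 g :: real and n K :: nat
  assumes n: "n > 0" and k0: "k0 > 0" and g: "g > 0" and K: "K \<ge> 1"
  shows "(\<Sum>m=2..K. (k0 + real n * real m) powr (g-1))
     \<le> (k0 + real n * real K) powr g / (real n * g) + (k0 + real n * real K) powr (g-1)"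
proof (cases "g \<ge> 1")
  case True
  show ?thesis using K
  proof (induction K rule: nat_induct_at_least)
    case base
    have "0 \<le> (k0 + real n) powr g / (real n * g) + (k0 + real n) powr (g - 1)"
      using g by (intro add_nonneg_nonneg divide_nonneg_nonneg) auto
    then show ?case by simp
  next
    case (Suc K)
    define N where "N = k0 + real n * real K"
    have N': "k0 + real n * real (Suc K) = N + n" unfolding N_def by (simp add: algebra_simps)
    have Npos: "N > 0" unfolding N_def using k0 by (simp add: add_pos_nonneg)
    have t: "g * N powr (g-1) * ((N+n) - N) \<le> (N+n) powr g - N powr g"
      using tangent_powr(1)[of N "N+n" g] Npos n g True by simp
    have "N powr (g-1) \<le> ((N+n) powr g - N powr g) / (real n * g)"
      using t n g by (simp add: field_simps)
    moreover have "(\<Sum>m=2..Suc K. (k0 + real n * real m) powr (g-1))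
       = (\<Sum>m=2..K. (k0 + real n * real m) powr (g-1)) + (N+n) powr (g-1)"
      using Suc.hyps N' by (simp add: sum.cl_ivl_Suc)
    ultimately show ?case using Suc.IH unfolding N' N_def[symmetric]
      by (simp add: diff_divide_distrib)
  qed
next
  case False
  have "(\<Sum>m=2..K. (k0 + real n * real m) powr (g-1))
     \<le> (k0 + real n * real K) powr g / (real n * g)" using K
  proof (induction K rule: nat_induct_at_least)
    case base
    then show ?case using k0 n g by simp
  next
    case (Suc K)
    define N where "N = k0 + real n * real K"
    have N': "k0 + real n * real (Suc K) = N + n" unfolding N_def by (simp add: algebra_simps)
    have Npos: "N > 0" unfolding N_def using k0 by (simp add: add_pos_nonneg)
    have t: "g * (N+n) powr (g-1) * ((N+n) - N) \<le> (N+n) powr g - N powr g"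
      using tangent_powr(2)[of N "N+n" g] Npos n g False by simp
    have "(N+n) powr (g-1) \<le> ((N+n) powr g - N powr g) / (real n * g)"
      using t n g by (simp add: field_simps)
    moreover have "(\<Sum>m=2..Suc K. (k0 + real n * real m) powr (g-1))
       = (\<Sum>m=2..K. (k0 + real n * real m) powr (g-1)) + (N+n) powr (g-1)"
      using Suc.hyps N' by (simp add: sum.cl_ivl_Suc)
    ultimately show ?case using Suc.IH unfolding N' N_def[symmetric]
      by (simp add: diff_divide_distrib)
  qed
  then show ?thesis by (smt (verit) powr_ge_zero)
qed

lemma harm_ln:
  fixes a :: real and n :: nat
  assumes a: "a \<ge> 0"
  shows "ln ((a + real n + 1) / (a + 1)) \<le> (\<Sum>i=1..n. 1 / (a + real i))"
proof (induction n)
  case 0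
  then show ?case using a by simp
next
  case (Suc n)
  have "ln ((a + real (Suc n) + 1) / (a + 1)) = ln ((a + real n + 1) / (a + 1)) + ln ((a + real n + 2) / (a + real n + 1))"
    using a by (simp add: ln_div algebra_simps)
  also have "ln ((a + real n + 2) / (a + real n + 1)) = ln (1 + 1 / (a + real n + 1))"
    using a by (simp add: field_simps)
  also have "\<dots> \<le> 1 / (a + real n + 1)"
    using a by (intro ln_add_one_self_le_self) simp
  finally show ?case using Suc.IH by (simp add: add.commute add.left_commute)
qed

lemma exp_harm_bound:
  fixes a \<alpha> :: real and n :: nat
  assumes a: "a \<ge> 0" and al: "\<alpha> > 0"
  shows "exp (- \<alpha> * (\<Sum>i=1..n. 1 / (a + real i))) \<le> ((a + 1) / (a + real n + 1)) powr \<alpha>"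
proof -
  have "exp (- \<alpha> * (\<Sum>i=1..n. 1 / (a + real i))) \<le> exp (- \<alpha> * ln ((a + real n + 1) / (a + 1)))"
    using harm_ln[OF a, of n] al by simp
  also have "- \<alpha> * ln ((a + real n + 1) / (a + 1)) = \<alpha> * ln ((a + 1) / (a + real n + 1))"
    using a by (simp add: ln_div algebra_simps)
  also have "exp \<dots> = ((a + 1) / (a + real n + 1)) powr \<alpha>"
    using a by (simp add: powr_def)
  finally show ?thesis .
qed

theorem lemma2:
  fixes n :: nat and \<xi> :: "nat \<Rightarrow> real"
    and k0 A1 A2 \<alpha> \<beta> \<epsilon> :: real
  assumes n_pos: "n > 0"
    and \<xi>_pos: "\<And>k. \<xi> k > 0"
    and k0_pos: "k0 > 0"
    and A1_pos: "A1 > 0" and A2_pos: "A2 > 0"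
    and \<beta>_pos: "\<beta> > 0" and \<alpha>\<beta>: "\<alpha> > \<beta>"
    and \<epsilon>_pos: "\<epsilon> > 0"
    and first: "\<xi> 1 \<le> exp (- \<alpha> * (\<Sum>i=1..n. 1 / (k0 + real i))) * \<xi> 0 + A1"
    and step: "\<And>k. k \<ge> 1 \<Longrightarrow>
        \<xi> (k + 1) \<le> exp (- \<alpha> * (\<Sum>i=1..n. 1 / (k0 + real n * real k + real i))
                         + \<epsilon> / (real k)^2) * \<xi> k
                   + A2 / (k0 + real n * (real k + 1)) powr (\<beta> + 1)"
    and K: "K \<ge> 1"
  shows "let c = exp (\<epsilon> * pi^2 / 6) in
    \<xi> K \<le> c * (k0 + 1) powr \<alpha> / (k0 + real n * real K) powr \<alpha> * \<xi> 0
          + c * (k0 + real n + 1) powr \<alpha> * A1 / (k0 + real n * real K) powr \<alpha>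
          + (c / (\<alpha> - \<beta>) * exp (\<alpha> / (k0 + real n + 1)) * A2)
              / (real n * (k0 + real n * real K) powr \<beta>)
          + c * exp (\<alpha> / (k0 + real n + 1)) * A2 / (k0 + real n * real K) powr (\<beta> + 1)"
proof -
  define c where "c = exp (\<epsilon> * pi^2 / 6)"
  define N where "N m = k0 + real n * real m" for m :: nat
  define E where "E = exp (\<alpha> / (k0 + real n + 1))"
  define C where "C K = exp (\<epsilon> * (\<Sum>j=1..<K. 1 / (real j)^2))" for K :: nat
  define Q where "Q K = (k0+1) powr \<alpha> * \<xi> 0 + (k0 + real n + 1) powr \<alpha> * A1
      + E * A2 * (\<Sum>m=2..K. N m powr (\<alpha> - \<beta> - 1))" for K :: nat
  have al: "\<alpha> > 0" using \<alpha>\<beta> \<beta>_pos by simp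
  have Npos: "N m > 0" for m unfolding N_def using k0_pos by (simp add: add_pos_nonneg)
  have C1: "C K \<ge> 1" for K unfolding C_def using \<epsilon>_pos by (simp add: sum_nonneg)
  have E0: "E > 0" unfolding E_def by simp
  have inv: "\<xi> K \<le> C K * Q K / (N K + 1) powr \<alpha>" using K
  proof (induction K rule: nat_induct_at_least)
    case base
    have e: "exp (- \<alpha> * (\<Sum>i=1..n. 1 / (k0 + real i))) \<le> ((k0 + 1) / (k0 + real n + 1)) powr \<alpha>"
      using exp_harm_bound[of k0 \<alpha> n] k0_pos al by simp
    have "\<xi> 1 \<le> ((k0 + 1) / (k0 + real n + 1)) powr \<alpha> * \<xi> 0 + A1"
      using first mult_right_mono[OF e less_imp_le[OF \<xi>_pos[of 0]]] by linarith
    also have "\<dots> = ((k0+1) powr \<alpha> * \<xi> 0 + (k0 + real n + 1) powr \<alpha> * A1) / (k0 + real n + 1) powr \<alpha>"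
      using k0_pos by (simp add: powr_divide field_simps)
    finally show ?case unfolding C_def Q_def N_def by (simp add: add.commute add.left_commute)
  next
    case (Suc K)
    define S where "S = (\<Sum>i=1..n. 1 / (k0 + real n * real K + real i))"
    have NS: "N (Suc K) = N K + real n" unfolding N_def by (simp add: algebra_simps)
    have st: "\<xi> (Suc K) \<le> exp (- \<alpha> * S) * exp (\<epsilon> / (real K)^2) * \<xi> K
                   + A2 / N (Suc K) powr (\<beta> + 1)"
    proof -
      have st0: "\<xi> (K + 1) \<le> exp (- \<alpha> * S + \<epsilon> / (real K)^2) * \<xi> K
                   + A2 / (k0 + real n * (real K + 1)) powr (\<beta> + 1)"
        using step[OF Suc.hyps] unfolding S_def .
      have "k0 + real n * (real K + 1) = N (Suc K)" by (simp add: N_def)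
      moreover have "exp (- \<alpha> * S + \<epsilon> / (real K)^2) = exp (- \<alpha> * S) * exp (\<epsilon> / (real K)^2)"
        by (rule exp_add)
      ultimately show ?thesis using st0 by simp
    qed
    have e: "exp (- \<alpha> * S) \<le> ((N K + 1) / (N (Suc K) + 1)) powr \<alpha>"
      using exp_harm_bound[of "N K" \<alpha> n] Npos[of K] al unfolding S_def NS
      by (simp add: N_def add.assoc)
    have CS: "C (Suc K) = C K * exp (\<epsilon> / (real K)^2)"
      unfolding C_def using Suc.hyps by (simp add: exp_add[symmetric] distrib_left)
    have "exp (- \<alpha> * S) * exp (\<epsilon> / (real K)^2) * \<xi> K
        \<le> ((N K + 1) / (N (Suc K) + 1)) powr \<alpha> * exp (\<epsilon> / (real K)^2) * (C K * Q K / (N K + 1) powr \<alpha>)"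
      using Suc.IH e \<xi>_pos[of K]
      by (intro mult_mono) auto
    also have "\<dots> = C (Suc K) * Q K / (N (Suc K) + 1) powr \<alpha>"
      unfolding CS using Npos[of K] Npos[of "Suc K"]
      by (simp add: powr_divide field_simps)
    finally have p1: "exp (- \<alpha> * S) * exp (\<epsilon> / (real K)^2) * \<xi> K \<le> C (Suc K) * Q K / (N (Suc K) + 1) powr \<alpha>" .
    define M where "M = N (Suc K)"
    have Mpos: "M > 0" unfolding M_def by (rule Npos)
    have Mge: "M \<ge> k0 + real n + 1"
    proof -
      have "(1::nat) \<le> n * K" using Suc.hyps n_pos by simp
      then have "real (1::nat) \<le> real (n * K)" by (rule of_nat_mono)
      then have "real n * real K \<ge> 1" by simp
      then show ?thesis unfolding M_def NS N_def by (simp add: algebra_simps)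
    qed
    have "1 + 1/M > 0" using Mpos by (simp add: add_pos_pos)
    then have "(1 + 1/M) powr \<alpha> = exp (\<alpha> * ln (1 + 1/M))" by (simp add: powr_def)
    also have "\<dots> \<le> exp (\<alpha> * (1/M))"
      using al Mpos mult_left_mono[OF ln_add_one_self_le_self[of "1/M"], of \<alpha>] by simp
    also have "\<dots> \<le> E" unfolding E_def using al Mpos Mge k0_pos
      by (simp add: frac_le)
    finally have oneM: "(1 + 1/M) powr \<alpha> \<le> E" .
    have "(M + 1) powr \<alpha> = M powr \<alpha> * (1 + 1/M) powr \<alpha>"
    proof -
      have eq: "M * (1 + 1/M) = M + 1" using Mpos by (simp add: field_simps)
      show ?thesis using powr_mult[of M "1+1/M" \<alpha>] unfolding eq .
    qed
    also have "\<dots> \<le> M powr \<alpha> * E" using oneM by (simp add: mult_left_mono)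
    finally have Mb: "(M + 1) powr \<alpha> \<le> M powr \<alpha> * E" .
    have pw: "M powr (\<alpha> - \<beta> - 1) = M powr \<alpha> / M powr (\<beta> + 1)"
      using powr_diff[of M \<alpha> "\<beta>+1"] by (simp add: algebra_simps)
    have inv1: "1 / M powr \<alpha> \<le> E / (M + 1) powr \<alpha>"
      using Mb Mpos by (simp add: divide_simps mult.commute)
    have "A2 / M powr (\<beta> + 1) = A2 * M powr (\<alpha> - \<beta> - 1) * (1 / M powr \<alpha>)"
      using Mpos unfolding pw by (simp add: field_simps)
    also have "\<dots> \<le> A2 * M powr (\<alpha> - \<beta> - 1) * (E / (M + 1) powr \<alpha>)"
      using inv1 A2_pos by (intro mult_left_mono) auto
    also have "\<dots> = E * A2 * M powr (\<alpha> - \<beta> - 1) / (M + 1) powr \<alpha>"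
      by simp
    also have "\<dots> \<le> C (Suc K) * (E * A2 * M powr (\<alpha> - \<beta> - 1)) / (M + 1) powr \<alpha>"
      using C1[of "Suc K"] E0 A2_pos Mpos
      by (intro divide_right_mono) (auto intro!: mult_right_mono[of 1 "C (Suc K)", simplified])
    finally have p2: "A2 / M powr (\<beta> + 1) \<le> C (Suc K) * (E * A2 * M powr (\<alpha> - \<beta> - 1)) / (M + 1) powr \<alpha>" .
    have QS: "Q (Suc K) = Q K + E * A2 * M powr (\<alpha> - \<beta> - 1)"
      unfolding Q_def M_def using Suc.hyps by (simp add: sum.cl_ivl_Suc algebra_simps)
    have "\<xi> (Suc K) \<le> C (Suc K) * Q K / (N (Suc K) + 1) powr \<alpha> + C (Suc K) * (E * A2 * M powr (\<alpha> - \<beta> - 1)) / (M + 1) powr \<alpha>"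
      using st p1 p2 unfolding M_def by linarith
    also have "\<dots> = C (Suc K) * Q (Suc K) / (N (Suc K) + 1) powr \<alpha>"
      unfolding QS M_def by (simp add: add_divide_distrib distrib_left)
    finally show ?case .
  qed
  have Ksum: "(\<Sum>j=1..<K. 1 / (real j)^2) \<le> pi^2 / 6"
  proof -
    have S: "(\<lambda>j. 1 / (real j + 1)^2) sums (pi^2 / 6)"
      using inverse_squares_sums by (simp add: add.commute)
    have "(\<Sum>j=1..<K. 1 / (real j)^2) = (\<Sum>j=Suc 0..<Suc (K-1). 1 / (real j)^2)"
      using K by simp
    also have "\<dots> = (\<Sum>j<K-1. 1 / (real j + 1)^2)"
      unfolding sum.shift_bounds_Suc_ivl by (simp add: atLeast0LessThan add.commute)
    also have "\<dots> \<le> (\<Sum>j. 1 / (real j + 1)^2)"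
      using S by (intro sum_le_suminf) (auto simp: sums_iff)
    also have "\<dots> = pi^2 / 6" using S by (simp add: sums_iff)
    finally show ?thesis .
  qed
  have CK: "C K \<le> c" unfolding C_def c_def using Ksum \<epsilon>_pos
    by (simp add: mult_left_mono)
  define g where "g = \<alpha> - \<beta>"
  have g0: "g > 0" unfolding g_def using \<alpha>\<beta> by simp
  define X where "X = N K"
  have X0: "X > 0" unfolding X_def by (rule Npos)
  have T: "(\<Sum>m=2..K. N m powr (\<alpha> - \<beta> - 1)) \<le> X powr g / (real n * g) + X powr (g - 1)"
    using sum_powr_bound[OF n_pos k0_pos g0 K] unfolding N_def X_def g_def .
  define Qf where "Qf = (k0+1) powr \<alpha> * \<xi> 0 + (k0 + real n + 1) powr \<alpha> * A1
      + E * A2 * (X powr g / (real n * g) + X powr (g - 1))"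
  have Q0: "Q K \<ge> 0" unfolding Q_def using \<xi>_pos[of 0] A1_pos A2_pos E0
    by (intro add_nonneg_nonneg mult_nonneg_nonneg sum_nonneg) (auto simp: less_imp_le)
  have QQ: "Q K \<le> Qf" unfolding Q_def Qf_def using T E0 A2_pos by simp
  have "\<xi> K \<le> C K * Q K / (N K + 1) powr \<alpha>" by (rule inv)
  also have "\<dots> \<le> c * Qf / X powr \<alpha>"
  proof (rule frac_le)
    show "0 \<le> c * Qf" using Q0 QQ unfolding c_def by simp
    show "C K * Q K \<le> c * Qf" using CK QQ Q0 C1[of K] by (intro mult_mono) auto
    show "0 < X powr \<alpha>" using X0 by simp
    show "X powr \<alpha> \<le> (N K + 1) powr \<alpha>" unfolding X_def using Npos[of K] al
      by (intro powr_mono2) auto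
  qed
  also have "\<dots> = c * (k0 + 1) powr \<alpha> / X powr \<alpha> * \<xi> 0
          + c * (k0 + real n + 1) powr \<alpha> * A1 / X powr \<alpha>
          + (c / (\<alpha> - \<beta>) * E * A2) / (real n * X powr \<beta>)
          + c * E * A2 / X powr (\<beta> + 1)"
  proof -
    have pw1: "X powr g = X powr \<alpha> / X powr \<beta>" unfolding g_def by (rule powr_diff)
    have pw2: "X powr (g - 1) = X powr \<alpha> / X powr (\<beta> + 1)"
      using powr_diff[of X \<alpha> "\<beta>+1"] unfolding g_def by (simp add: algebra_simps)
    show ?thesis unfolding Qf_def pw1 pw2 g_def[symmetric] using X0 g0 n_pos
      by (simp add: field_simps)
  qed
  finally show ?thesis unfolding Let_def c_def[symmetric] X_def N_def E_def .
qed

end
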